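(* Let $G$ be a group, $N$ a normal subgroup, $m\in\mathbb{N}$, and $x_1,\dots,x_m\in N$ with $x_1\cdots x_m\in[G,N]$. Set $a_n=\mathrm{cl}_{G,N}(x_1^n+\cdots+x_m^n)+(m-1)$ for $n\in\mathbb{N}$. Then $(a_n)_n$ is subadditive; consequently the limit $\lim_{n\to\infty}\frac1n\mathrm{cl}_{G,N}(x_1^n+\cdots+x_m^n)$ exists.
   Context: $[G,N]$ is generated by $[g,x]=gxg^{-1}x^{-1}$ ($g\in G,x\in N$); $\mathrm{cl}_{G,N}$ is the word length on $[G,N]$ with respect to these generators. For $y_1,\dots,y_m\in N$ with $y_1\cdots y_m\in[G,N]$, $\mathrm{cl}_{G,N}(y_1+\cdots+y_m)=\inf_{g_1,\dots,g_{m-1}\in G}\mathrm{cl}_{G,N}(y_1g_1y_2g_1^{-1}\cdots g_{m-1}y_mg_{m-1}^{-1})$. *)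

theory Defs
  imports "HOL-Algebra.Algebra" "HOL-Analysis.Analysis"
begin

definition comm :: "('a, 'b) monoid_scheme \<Rightarrow> 'a \<Rightarrow> 'a \<Rightarrow> 'a" where
  "comm G g x = g \<otimes>\<^bsub>G\<^esub> x \<otimes>\<^bsub>G\<^esub> inv\<^bsub>G\<^esub> g \<otimes>\<^bsub>G\<^esub> inv\<^bsub>G\<^esub> x"

definition comm_gens :: "('a, 'b) monoid_scheme \<Rightarrow> 'a set \<Rightarrow> 'a set" where
  "comm_gens G N = {comm G g x | g x. g \<in> carrier G \<and> x \<in> N}"

definition mixed_comm :: "('a, 'b) monoid_scheme \<Rightarrow> 'a set \<Rightarrow> 'a set" where
  "mixed_comm G N = generate G (comm_gens G N)"

definition cl :: "('a, 'b) monoid_scheme \<Rightarrow> 'a set \<Rightarrow> 'a \<Rightarrow> nat" where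
  "cl G N y = Inf {k. \<exists>cs. length cs = k
      \<and> set cs \<subseteq> comm_gens G N \<union> (\<lambda>c. inv\<^bsub>G\<^esub> c) ` comm_gens G N
      \<and> y = foldr (\<lambda>c acc. c \<otimes>\<^bsub>G\<^esub> acc) cs \<one>\<^bsub>G\<^esub>}"

definition ordprod :: "('a, 'b) monoid_scheme \<Rightarrow> nat \<Rightarrow> (nat \<Rightarrow> 'a) \<Rightarrow> 'a" where
  "ordprod G m y = foldr (\<lambda>i acc. y i \<otimes>\<^bsub>G\<^esub> acc) [1..<Suc m] \<one>\<^bsub>G\<^esub>"

text \<open>y_1 g_1 y_2 g_1^-1 ... g_{m-1} y_m g_{m-1}^-1, where h i plays the role of g_{i-1}
  (i = 2..m).\<close>
definition conjprod :: "('a, 'b) monoid_scheme \<Rightarrow> nat \<Rightarrow> (nat \<Rightarrow> 'a) \<Rightarrow> (nat \<Rightarrow> 'a) \<Rightarrow> 'a" where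
  "conjprod G m y h = y 1 \<otimes>\<^bsub>G\<^esub>
     foldr (\<lambda>i acc. h i \<otimes>\<^bsub>G\<^esub> y i \<otimes>\<^bsub>G\<^esub> inv\<^bsub>G\<^esub> (h i) \<otimes>\<^bsub>G\<^esub> acc) [2..<Suc m] \<one>\<^bsub>G\<^esub>"

definition cl_sum :: "('a, 'b) monoid_scheme \<Rightarrow> 'a set \<Rightarrow> nat \<Rightarrow> (nat \<Rightarrow> 'a) \<Rightarrow> nat" where
  "cl_sum G N m y = Inf {cl G N (conjprod G m y h) | h. \<forall>i\<in>{2..m}. h i \<in> carrier G}"

end

theory Submission
  imports Defs
begin


definition wprod :: "('a, 'b) monoid_scheme \<Rightarrow> 'a list \<Rightarrow> 'a" where
  "wprod G cs = foldr (\<lambda>c acc. c \<otimes>\<^bsub>G\<^esub> acc) cs \<one>\<^bsub>G\<^esub>"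

definition letters :: "('a, 'b) monoid_scheme \<Rightarrow> 'a set \<Rightarrow> 'a set" where
  "letters G N = comm_gens G N \<union> (\<lambda>c. inv\<^bsub>G\<^esub> c) ` comm_gens G N"

definition cf :: "('a, 'b) monoid_scheme \<Rightarrow> (nat \<Rightarrow> 'a) \<Rightarrow> (nat \<Rightarrow> 'a) \<Rightarrow> nat list \<Rightarrow> 'a" where
  "cf G h y l = foldr (\<lambda>i acc. h i \<otimes>\<^bsub>G\<^esub> y i \<otimes>\<^bsub>G\<^esub> inv\<^bsub>G\<^esub> (h i) \<otimes>\<^bsub>G\<^esub> acc) l \<one>\<^bsub>G\<^esub>"

context group
begin

lemma cancel1 [simp]: "a \<in> carrier G \<Longrightarrow> b \<in> carrier G \<Longrightarrow> a \<otimes> (inv a \<otimes> b) = b"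
  by (simp add: m_assoc[symmetric])
lemma cancel2 [simp]: "a \<in> carrier G \<Longrightarrow> b \<in> carrier G \<Longrightarrow> inv a \<otimes> (a \<otimes> b) = b"
  by (simp add: m_assoc[symmetric])

lemma wprod_simps [simp]: "wprod G [] = \<one>" "wprod G (c # cs) = c \<otimes> wprod G cs"
  by (simp_all add: wprod_def)

lemma wprod_closed [simp]: "set cs \<subseteq> carrier G \<Longrightarrow> wprod G cs \<in> carrier G"
  by (induct cs) auto

lemma wprod_append: "set cs \<subseteq> carrier G \<Longrightarrow> set ds \<subseteq> carrier G \<Longrightarrow>
   wprod G (cs @ ds) = wprod G cs \<otimes> wprod G ds"
  by (induct cs) (auto simp: m_assoc)

lemma wprod_conj: "set cs \<subseteq> carrier G \<Longrightarrow> e \<in> carrier G \<Longrightarrow>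
   e \<otimes> wprod G cs \<otimes> inv e = wprod G (map (\<lambda>c. e \<otimes> c \<otimes> inv e) cs)"
proof (induct cs)
  case Nil then show ?case by simp
next
  case (Cons c cs)
  have cc: "c \<in> carrier G" "set cs \<subseteq> carrier G" using Cons.prems by auto
  have ih: "e \<otimes> wprod G cs \<otimes> inv e = wprod G (map (\<lambda>c. e \<otimes> c \<otimes> inv e) cs)"
    using Cons.hyps cc Cons.prems by blast
  have "e \<otimes> wprod G (c # cs) \<otimes> inv e = (e \<otimes> c \<otimes> inv e) \<otimes> (e \<otimes> wprod G cs \<otimes> inv e)"
    using cc Cons.prems by (simp add: m_assoc)
  then show ?case using ih by simp
qed

lemma wprod_inv: "set cs \<subseteq> carrier G \<Longrightarrow> inv (wprod G cs) = wprod G (rev (map (\<lambda>c. inv c) cs))"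
proof (induct cs)
  case Nil then show ?case by simp
next
  case (Cons c cs)
  have cc: "c \<in> carrier G" "set cs \<subseteq> carrier G" using Cons.prems by auto
  have ih: "inv (wprod G cs) = wprod G (rev (map (\<lambda>c. inv c) cs))"
    using Cons.hyps cc by blast
  have s: "set (rev (map (\<lambda>c. inv c) cs)) \<subseteq> carrier G" using cc by auto
  show ?case using cc s by (simp add: inv_mult_group ih wprod_append)
qed

lemma comm_closed [simp]: "g \<in> carrier G \<Longrightarrow> x \<in> carrier G \<Longrightarrow> comm G g x \<in> carrier G"
  by (simp add: comm_def)

lemma comm_gens_carrier: "N \<subseteq> carrier G \<Longrightarrow> comm_gens G N \<subseteq> carrier G"
  by (auto simp: comm_gens_def)

lemma letters_carrier: "N \<subseteq> carrier G \<Longrightarrow> letters G N \<subseteq> carrier G"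
  using comm_gens_carrier by (auto simp: letters_def)

lemma letter_inv: assumes "N \<subseteq> carrier G" "c \<in> letters G N" shows "inv c \<in> letters G N"
proof -
  have s: "comm_gens G N \<subseteq> carrier G" using comm_gens_carrier[OF assms(1)] .
  show ?thesis using assms(2) unfolding letters_def
  proof
    assume "c \<in> comm_gens G N" then show "inv c \<in> comm_gens G N \<union> (\<lambda>c. inv c) ` comm_gens G N" by blast
  next
    assume "c \<in> (\<lambda>c. inv c) ` comm_gens G N"
    then obtain d where "d \<in> comm_gens G N" "c = inv d" by blast
    then show "inv c \<in> comm_gens G N \<union> (\<lambda>c. inv c) ` comm_gens G N" using s by auto
  qed
qed

lemma inv_conj: "e \<in> carrier G \<Longrightarrow> g \<in> carrier G \<Longrightarrow> inv (e \<otimes> (g \<otimes> inv e)) = e \<otimes> (inv g \<otimes> inv e)"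
  by (rule inv_equality) (simp_all add: m_assoc)

lemma comm_conj: "e \<in> carrier G \<Longrightarrow> g \<in> carrier G \<Longrightarrow> x \<in> carrier G \<Longrightarrow>
  e \<otimes> comm G g x \<otimes> inv e = comm G (e \<otimes> g \<otimes> inv e) (e \<otimes> x \<otimes> inv e)"
  by (simp add: comm_def inv_conj m_assoc)

lemma comm_in_gens: "g \<in> carrier G \<Longrightarrow> x \<in> N \<Longrightarrow> comm G g x \<in> comm_gens G N"
  unfolding comm_gens_def by blast

lemma comm_gensE: "c \<in> comm_gens G N \<Longrightarrow> (\<And>g x. g \<in> carrier G \<Longrightarrow> x \<in> N \<Longrightarrow> c = comm G g x \<Longrightarrow> P) \<Longrightarrow> P"
  unfolding comm_gens_def by blast

lemma gen_conj:
  assumes N: "N \<lhd> G" and c: "c \<in> comm_gens G N" and e: "e \<in> carrier G"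
  shows "e \<otimes> c \<otimes> inv e \<in> comm_gens G N"
proof -
  have sub: "N \<subseteq> carrier G" using N normal_imp_subgroup subgroup.subset by blast
  obtain g x where gx: "g \<in> carrier G" "x \<in> N" "c = comm G g x" using c by (rule comm_gensE)
  have xc: "x \<in> carrier G" using gx sub by blast
  have xN: "e \<otimes> x \<otimes> inv e \<in> N" using normal.inv_op_closed2[OF N e gx(2)] .
  have ec: "e \<otimes> g \<otimes> inv e \<in> carrier G" using e gx by simp
  show ?thesis unfolding gx(3) comm_conj[OF e gx(1) xc] by (rule comm_in_gens[OF ec xN])
qed

lemma letter_conj:
  assumes N: "N \<lhd> G" and c: "c \<in> letters G N" and e: "e \<in> carrier G"
  shows "e \<otimes> c \<otimes> inv e \<in> letters G N"
proof -
  have sub: "N \<subseteq> carrier G" using N normal_imp_subgroup subgroup.subset by blast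
  show ?thesis using c unfolding letters_def
  proof
    assume "c \<in> comm_gens G N" then show "e \<otimes> c \<otimes> inv e \<in> comm_gens G N \<union> (\<lambda>c. inv c) ` comm_gens G N"
      using gen_conj[OF N _ e] by blast
  next
    assume "c \<in> (\<lambda>c. inv c) ` comm_gens G N"
    then obtain d where d: "d \<in> comm_gens G N" "c = inv d" by blast
    have dc: "d \<in> carrier G" using d(1) comm_gens_carrier[OF sub] by blast
    have "e \<otimes> c \<otimes> inv e = inv (e \<otimes> d \<otimes> inv e)" using dc e
      by (simp add: d(2) inv_mult_group m_assoc)
    moreover have "e \<otimes> d \<otimes> inv e \<in> comm_gens G N" using gen_conj[OF N d(1) e] .
    ultimately show "e \<otimes> c \<otimes> inv e \<in> comm_gens G N \<union> (\<lambda>c. inv c) ` comm_gens G N" by blast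
  qed
qed

lemma wprod_mixed: "N \<subseteq> carrier G \<Longrightarrow> set cs \<subseteq> letters G N \<Longrightarrow> wprod G cs \<in> mixed_comm G N"
proof (induct cs)
  case Nil then show ?case by (simp add: mixed_comm_def generate.one)
next
  case (Cons c cs)
  then have "c \<in> mixed_comm G N" unfolding letters_def mixed_comm_def
    using generate.incl generate.inv by auto
  then show ?case using Cons generate.eng unfolding mixed_comm_def by auto
qed

lemma mixed_repr: "y \<in> mixed_comm G N \<Longrightarrow> N \<subseteq> carrier G \<Longrightarrow> \<exists>cs. set cs \<subseteq> letters G N \<and> y = wprod G cs"
  unfolding mixed_comm_def
proof (induct rule: generate.induct)
  case one then show ?case by (intro exI[of _ "[]"]) simp
next
  case (incl h)
  then have "h \<in> carrier G" using comm_gens_carrier by blast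
  then show ?case using incl by (intro exI[of _ "[h]"]) (simp add: letters_def)
next
  case (inv h)
  then have "h \<in> carrier G" using comm_gens_carrier by blast
  then show ?case using inv by (intro exI[of _ "[inv h]"]) (simp add: letters_def)
next
  case (eng h1 h2)
  then obtain c1 c2 where "set c1 \<subseteq> letters G N" "h1 = wprod G c1" "set c2 \<subseteq> letters G N" "h2 = wprod G c2"
    by blast
  then show ?case using letters_carrier[OF eng(5)]
    by (intro exI[of _ "c1 @ c2"]) (auto simp: wprod_append)
qed

lemma cl_le: "set cs \<subseteq> letters G N \<Longrightarrow> cl G N (wprod G cs) \<le> length cs"
  unfolding cl_def Inf_nat_def
  by (rule Least_le) (auto simp: letters_def wprod_def)

lemma cl_attain: assumes "y \<in> mixed_comm G N" "N \<subseteq> carrier G"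
  shows "\<exists>cs. set cs \<subseteq> letters G N \<and> length cs = cl G N y \<and> y = wprod G cs"
proof -
  let ?K = "{k. \<exists>cs. length cs = k
      \<and> set cs \<subseteq> comm_gens G N \<union> (\<lambda>c. inv\<^bsub>G\<^esub> c) ` comm_gens G N
      \<and> y = foldr (\<lambda>c acc. c \<otimes>\<^bsub>G\<^esub> acc) cs \<one>\<^bsub>G\<^esub>}"
  obtain cs where "set cs \<subseteq> letters G N" "y = wprod G cs" using mixed_repr assms by blast
  then have "?K \<noteq> {}" unfolding letters_def wprod_def by auto
  then have "Inf ?K \<in> ?K" by (rule Inf_nat_def1)
  then obtain ds where ds: "length ds = Inf ?K" "set ds \<subseteq> letters G N" "y = wprod G ds"
    unfolding letters_def wprod_def by blast
  have "cl G N y = Inf ?K" by (simp add: cl_def)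
  then show ?thesis using ds by metis
qed

end


context group
begin

lemma cf_simps [simp]: "cf G h y [] = \<one>" "cf G h y (i # l) = h i \<otimes> y i \<otimes> inv (h i) \<otimes> cf G h y l"
  by (simp_all add: cf_def)

lemma cf_closed [simp]: "\<forall>i\<in>set l. h i \<in> carrier G \<and> y i \<in> carrier G \<Longrightarrow> cf G h y l \<in> carrier G"
  by (induct l) auto

lemma cf_conj: "\<forall>i\<in>set l. h i \<in> carrier G \<and> y i \<in> carrier G \<Longrightarrow> e \<in> carrier G \<Longrightarrow>
  e \<otimes> cf G h y l \<otimes> inv e = cf G (\<lambda>j. e \<otimes> h j) y l"
proof (induct l)
  case Nil then show ?case by simp
next
  case (Cons i l)
  define C where "C = cf G h y l"
  have hi: "h i \<in> carrier G" "y i \<in> carrier G" "\<forall>i\<in>set l. h i \<in> carrier G \<and> y i \<in> carrier G"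
    using Cons.prems by auto
  have C: "C \<in> carrier G" using hi by (simp add: C_def)
  have ih: "e \<otimes> C \<otimes> inv e = cf G (\<lambda>j. e \<otimes> h j) y l" using Cons.hyps hi Cons.prems(2) by (simp add: C_def)
  have "e \<otimes> cf G h y (i # l) \<otimes> inv e = (e \<otimes> (h i \<otimes> y i \<otimes> inv (h i)) \<otimes> inv e) \<otimes> (e \<otimes> C \<otimes> inv e)"
    using hi C Cons.prems(2) by (simp add: C_def[symmetric] m_assoc)
  also have "e \<otimes> (h i \<otimes> y i \<otimes> inv (h i)) \<otimes> inv e = (e \<otimes> h i) \<otimes> y i \<otimes> inv (e \<otimes> h i)"
    using hi Cons.prems(2) by (simp add: m_assoc inv_mult_group)
  finally show ?case using ih by simp
qed

lemma inv_comm_letter: "g \<in> carrier G \<Longrightarrow> x \<in> N \<Longrightarrow> inv (comm G g x) \<in> letters G N"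
  unfolding letters_def using comm_in_gens[of g x] by blast

lemma inv_comm: "c \<in> carrier G \<Longrightarrow> x \<in> carrier G \<Longrightarrow> inv (comm G c x) = x \<otimes> c \<otimes> inv x \<otimes> inv c"
  unfolding comm_def by (rule inv_equality) (simp_all add: m_assoc)

lemma lam_eq:
  assumes "g \<in> carrier G" "f \<in> carrier G" "y \<in> carrier G" "z \<in> carrier G"
  shows "inv (comm G (f \<otimes> inv g) (g \<otimes> y \<otimes> inv g)) \<otimes> (f \<otimes> (y \<otimes> z) \<otimes> inv f)
    = (g \<otimes> y \<otimes> inv g) \<otimes> (f \<otimes> z \<otimes> inv f)"
proof -
  have i1: "inv (g \<otimes> y \<otimes> inv g) = g \<otimes> (inv y \<otimes> inv g)"
    using assms inv_conj[of g y] by (simp add: m_assoc)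
  have i2: "inv (f \<otimes> inv g) = g \<otimes> inv f" using assms by (simp add: inv_mult_group)
  show ?thesis using assms by (simp add: inv_comm inv_conj i2 m_assoc)
qed

lemma cf_one: "\<forall>i\<in>set l. h i \<in> carrier G \<Longrightarrow> cf G h (\<lambda>_. \<one>) l = \<one>"
  by (induct l) auto

lemma key:
  assumes N: "N \<lhd> G"
  shows "\<forall>i\<in>set l. y i \<in> N \<and> z i \<in> carrier G \<and> f i \<in> carrier G \<and> g i \<in> carrier G \<Longrightarrow>
    \<exists>ws. length ws = length l \<and> set ws \<subseteq> letters G N \<and>
      cf G g y l \<otimes> cf G f z l = wprod G ws \<otimes> cf G f (\<lambda>i. y i \<otimes> z i) l"
proof (induct l arbitrary: g)
  case Nil then show ?case by (intro exI[of _ "[]"]) simp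
next
  case (Cons i l)
  have sub: "N \<subseteq> carrier G" using N normal_imp_subgroup subgroup.subset by blast
  have hyp: "\<forall>j\<in>set (i # l). y j \<in> N \<and> z j \<in> carrier G \<and> f j \<in> carrier G \<and> g j \<in> carrier G"
    using Cons(2) .
  have yc: "\<forall>j\<in>set (i # l). y j \<in> carrier G" using hyp sub by auto
  define A where "A = g i \<otimes> y i \<otimes> inv (g i)"
  define B where "B = f i \<otimes> z i \<otimes> inv (f i)"
  define E where "E = f i \<otimes> (y i \<otimes> z i) \<otimes> inv (f i)"
  define Fg where "Fg = cf G g y l"
  define Ff where "Ff = cf G f z l"
  define Fyz where "Fyz = cf G f (\<lambda>i. y i \<otimes> z i) l"
  have c: "A \<in> carrier G" "B \<in> carrier G" "E \<in> carrier G" "Fg \<in> carrier G" "Ff \<in> carrier G"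
     "Fyz \<in> carrier G"
    using hyp yc by (auto simp: A_def B_def E_def Fg_def Ff_def Fyz_def)
  define g' where "g' = (\<lambda>j. inv B \<otimes> g j)"
  have "\<forall>j\<in>set l. y j \<in> N \<and> z j \<in> carrier G \<and> f j \<in> carrier G \<and> g' j \<in> carrier G"
    using hyp c by (auto simp: g'_def)
  from Cons(1)[OF this] obtain ws where ws: "length ws = length l" "set ws \<subseteq> letters G N"
     "cf G g' y l \<otimes> cf G f z l = wprod G ws \<otimes> Fyz" unfolding Fyz_def by blast
  have wsc: "set ws \<subseteq> carrier G" using ws letters_carrier sub by blast
  have "cf G g' y l = inv B \<otimes> Fg \<otimes> B"
    using cf_conj[of l g y "inv B"] hyp yc c by (simp add: g'_def Fg_def)
  with ws(3) have ws3: "inv B \<otimes> Fg \<otimes> B \<otimes> Ff = wprod G ws \<otimes> Fyz" by (simp add: Ff_def)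
  define lam where "lam = inv (comm G (f i \<otimes> inv (g i)) (g i \<otimes> y i \<otimes> inv (g i)))"
  have gi: "g i \<in> carrier G" "f i \<in> carrier G" "y i \<in> carrier G" "z i \<in> carrier G"
    using hyp yc by auto
  have "y i \<in> N" using hyp by auto
  then have "g i \<otimes> y i \<otimes> inv (g i) \<in> N" using normal.inv_op_closed2[OF N gi(1)] by blast
  then have lamL: "lam \<in> letters G N" unfolding lam_def
    by (rule inv_comm_letter[rotated]) (use gi in simp)
  have AB: "A \<otimes> B = lam \<otimes> E"
    unfolding A_def B_def lam_def E_def using lam_eq[OF gi] by simp
  define ws' where "ws' = map (\<lambda>c. E \<otimes> c \<otimes> inv E) ws"
  have ws'L: "set ws' \<subseteq> letters G N" using ws(2) letter_conj[OF N] c by (auto simp: ws'_def)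
  have EW: "E \<otimes> wprod G ws = wprod G ws' \<otimes> E"
  proof -
    have "E \<otimes> wprod G ws \<otimes> inv E = wprod G ws'" using wprod_conj[OF wsc c(3)] by (simp add: ws'_def)
    then have "wprod G ws' \<otimes> E = E \<otimes> wprod G ws \<otimes> inv E \<otimes> E" by simp
    also have "\<dots> = E \<otimes> wprod G ws" using c wsc by (simp add: m_assoc)
    finally show ?thesis by simp
  qed
  have ws'c: "set ws' \<subseteq> carrier G" using ws'L letters_carrier sub by blast
  have lamc: "lam \<in> carrier G" using lamL letters_carrier sub by blast
  have "cf G g y (i # l) \<otimes> cf G f z (i # l) = (A \<otimes> Fg) \<otimes> (B \<otimes> Ff)"
    by (simp add: A_def B_def Fg_def Ff_def)
  also have "\<dots> = (A \<otimes> B) \<otimes> (inv B \<otimes> Fg \<otimes> B \<otimes> Ff)"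
    using c by (simp add: m_assoc)
  also have "\<dots> = (lam \<otimes> E) \<otimes> (wprod G ws \<otimes> Fyz)"
    by (simp only: AB ws3)
  also have "\<dots> = lam \<otimes> (E \<otimes> wprod G ws) \<otimes> Fyz"
    using c lamc wsc by (simp add: m_assoc)
  also have "\<dots> = lam \<otimes> (wprod G ws' \<otimes> E) \<otimes> Fyz"
    by (simp only: EW)
  also have "\<dots> = (lam \<otimes> wprod G ws') \<otimes> (E \<otimes> Fyz)"
    using c lamc ws'c by (simp add: m_assoc)
  also have "\<dots> = wprod G (lam # ws') \<otimes> cf G f (\<lambda>i. y i \<otimes> z i) (i # l)"
    by (simp add: E_def Fyz_def)
  finally show ?case using ws ws'L lamL by (intro exI[of _ "lam # ws'"]) (auto simp: ws'_def)
qed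

end


context group
begin

lemma cf_cong: "\<forall>i\<in>set l. y i = y' i \<Longrightarrow> cf G h y l = cf G h y' l"
  by (induct l) auto

lemma cf_one_conj: "\<forall>i\<in>set l. y i \<in> carrier G \<Longrightarrow> cf G (\<lambda>_. \<one>) y l = foldr (\<lambda>i acc. y i \<otimes> acc) l \<one>"
  by (induct l) auto

lemma conjprod_cf: "conjprod G m y h = y 1 \<otimes> cf G h y [2..<Suc m]"
  by (simp add: conjprod_def cf_def)

lemma H_sub: "N \<subseteq> carrier G \<Longrightarrow> subgroup (mixed_comm G N) G"
  unfolding mixed_comm_def by (rule generate_is_subgroup) (rule comm_gens_carrier)

lemma sub_pow: "subgroup H G \<Longrightarrow> x \<in> H \<Longrightarrow> x [^] (n::nat) \<in> H"
  by (induct n) (auto intro: subgroup.m_closed subgroup.one_closed)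

lemma combine:
  fixes n k :: nat
  assumes N: "N \<lhd> G" and x: "\<forall>i\<in>{1..m}. x i \<in> N" and m: "m \<ge> 1"
    and h: "\<forall>i\<in>{2..m}. h i \<in> carrier G" and f: "\<forall>i\<in>{2..m}. f i \<in> carrier G"
  shows "\<exists>ws. length ws = m - 1 \<and> set ws \<subseteq> letters G N \<and>
    conjprod G m (\<lambda>i. x i [^] n) h \<otimes> conjprod G m (\<lambda>i. x i [^] k) f
      = wprod G ws \<otimes> conjprod G m (\<lambda>i. x i [^] (n + k)) f"
proof -
  have sub: "N \<subseteq> carrier G" using N normal_imp_subgroup subgroup.subset by blast
  define l where "l = [2..<Suc m]"
  have setl: "set l = {2..m}" by (auto simp: l_def)
  have xc: "\<forall>i\<in>set l. x i \<in> carrier G" using x sub setl by auto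
  have xN: "\<forall>i\<in>set l. x i [^] j \<in> N" for j :: nat
    using x setl sub_pow[OF normal_imp_subgroup[OF N]] by auto
  define a where "a = x 1"
  have a: "a \<in> carrier G" using x sub m by (auto simp: a_def)
  define b where "b = inv (a [^] k)"
  have b: "b \<in> carrier G" unfolding b_def by (intro inv_closed nat_pow_closed a)
  define g where "g = (\<lambda>j. b \<otimes> h j)"
  have gc: "\<forall>i\<in>set l. g i \<in> carrier G" using b h setl by (auto simp: g_def)
  have hc: "\<forall>i\<in>set l. h i \<in> carrier G" using h setl by auto
  have fc: "\<forall>i\<in>set l. f i \<in> carrier G" using f setl by auto
  define Fh where "Fh = cf G h (\<lambda>i. x i [^] n) l"
  define Ff where "Ff = cf G f (\<lambda>i. x i [^] k) l"
  define Fg where "Fg = cf G g (\<lambda>i. x i [^] n) l"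
  define Fr where "Fr = cf G f (\<lambda>i. x i [^] (n + k)) l"
  have cc: "Fh \<in> carrier G" "Ff \<in> carrier G" "Fg \<in> carrier G" "Fr \<in> carrier G"
    using xc hc fc gc by (auto simp: Fh_def Ff_def Fg_def Fr_def)
  have "b \<otimes> Fh \<otimes> inv b = Fg" unfolding Fh_def Fg_def g_def
    by (rule cf_conj) (use xc hc b in auto)
  then have "inv b \<otimes> Fg \<otimes> b = inv b \<otimes> (b \<otimes> Fh \<otimes> inv b) \<otimes> b" by simp
  also have "\<dots> = Fh" using b cc by (simp add: m_assoc)
  finally have Fh: "Fh = inv b \<otimes> Fg \<otimes> b" by simp
  have "\<forall>i\<in>set l. x i [^] n \<in> N \<and> x i [^] k \<in> carrier G \<and> f i \<in> carrier G \<and> g i \<in> carrier G"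
    using xN xc fc gc by auto
  from key[OF N this] obtain ws where ws: "length ws = length l" "set ws \<subseteq> letters G N"
    "Fg \<otimes> Ff = wprod G ws \<otimes> cf G f (\<lambda>i. x i [^] n \<otimes> x i [^] k) l"
    unfolding Fg_def Ff_def by blast
  have "cf G f (\<lambda>i. x i [^] n \<otimes> x i [^] k) l = Fr"
    unfolding Fr_def by (rule cf_cong) (use xc in \<open>simp add: nat_pow_mult\<close>)
  with ws(3) have ws3: "Fg \<otimes> Ff = wprod G ws \<otimes> Fr" by simp
  have wsc: "set ws \<subseteq> carrier G" using ws letters_carrier sub by blast
  define e where "e = a [^] (n + k)"
  have e: "e \<in> carrier G" using a by (simp add: e_def)
  define ws' where "ws' = map (\<lambda>c. e \<otimes> c \<otimes> inv e) ws"
  have ws'L: "set ws' \<subseteq> letters G N" using ws(2) letter_conj[OF N] e by (auto simp: ws'_def)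
  have ws'c: "set ws' \<subseteq> carrier G" using ws'L letters_carrier sub by blast
  have EW: "e \<otimes> wprod G ws = wprod G ws' \<otimes> e"
  proof -
    have "e \<otimes> wprod G ws \<otimes> inv e = wprod G ws'" using wprod_conj[OF wsc e] by (simp add: ws'_def)
    then have "wprod G ws' \<otimes> e = e \<otimes> wprod G ws \<otimes> inv e \<otimes> e" by simp
    also have "\<dots> = e \<otimes> wprod G ws" using e wsc by (simp add: m_assoc)
    finally show ?thesis by simp
  qed
  have ib: "inv b = a [^] k" using a by (simp add: b_def)
  have "conjprod G m (\<lambda>i. x i [^] n) h \<otimes> conjprod G m (\<lambda>i. x i [^] k) f
      = (a [^] n \<otimes> Fh) \<otimes> (a [^] k \<otimes> Ff)"
    by (simp add: conjprod_cf Fh_def Ff_def l_def a_def)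
  also have "\<dots> = (a [^] n \<otimes> a [^] k) \<otimes> (Fg \<otimes> Ff)"
    using a cc by (simp add: Fh b_def m_assoc)
  also have "\<dots> = e \<otimes> (wprod G ws \<otimes> Fr)"
    by (simp add: ws3 e_def nat_pow_mult a)
  also have "\<dots> = (e \<otimes> wprod G ws) \<otimes> Fr"
    using e wsc cc by (simp add: m_assoc)
  also have "\<dots> = wprod G ws' \<otimes> (e \<otimes> Fr)"
    using e ws'c cc by (simp add: EW m_assoc)
  also have "e \<otimes> Fr = conjprod G m (\<lambda>i. x i [^] (n + k)) f"
    by (simp add: conjprod_cf Fr_def l_def a_def e_def)
  finally have fin: "conjprod G m (\<lambda>i. x i [^] n) h \<otimes> conjprod G m (\<lambda>i. x i [^] k) f
      = wprod G ws' \<otimes> conjprod G m (\<lambda>i. x i [^] (n + k)) f" .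
  have ll: "length l = m - 1" unfolding l_def length_upt by arith
  have len: "length ws' = m - 1" using ws(1) ll by (simp add: ws'_def)
  show ?thesis using fin len ws'L by blast
qed

end


context group
begin

lemma conjprod_closed: "\<forall>i\<in>{1..m}. y i \<in> carrier G \<Longrightarrow> \<forall>i\<in>{2..m}. h i \<in> carrier G \<Longrightarrow> m \<ge> 1 \<Longrightarrow>
  conjprod G m y h \<in> carrier G"
  unfolding conjprod_cf by (intro m_closed cf_closed) auto

lemma P1_mem:
  assumes N: "N \<lhd> G" and x: "\<forall>i\<in>{1..m}. x i \<in> N" and m: "m \<ge> 1"
    and o: "ordprod G m x \<in> mixed_comm G N"
    and f: "\<forall>i\<in>{2..m}. f i \<in> carrier G"
  shows "conjprod G m x f \<in> mixed_comm G N"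
proof -
  have sub: "N \<subseteq> carrier G" using N normal_imp_subgroup subgroup.subset by blast
  define l where "l = [2..<Suc m]"
  have setl: "set l = {2..m}" by (auto simp: l_def)
  have xc: "\<forall>i\<in>set l. x i \<in> carrier G" using x sub setl by auto
  have fc: "\<forall>i\<in>set l. f i \<in> carrier G" using f setl by auto
  have "\<forall>i\<in>set l. x i \<in> N \<and> (\<lambda>_. \<one>) i \<in> carrier G \<and> (\<lambda>_. \<one>) i \<in> carrier G \<and> f i \<in> carrier G"
    using x setl fc by auto
  from key[OF N this] obtain ws where ws: "length ws = length l" "set ws \<subseteq> letters G N"
    "cf G f x l \<otimes> cf G (\<lambda>_. \<one>) (\<lambda>_. \<one>) l = wprod G ws \<otimes> cf G (\<lambda>_. \<one>) (\<lambda>i. x i \<otimes> \<one>) l"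
    by blast
  define Op where "Op = foldr (\<lambda>i acc. x i \<otimes> acc) l \<one>"
  have Opc: "Op \<in> carrier G" unfolding Op_def using xc by (induct l) auto
  have "cf G (\<lambda>_. \<one>) (\<lambda>i. x i \<otimes> \<one>) l = cf G (\<lambda>_. \<one>) x l"
    by (rule cf_cong) (use xc in auto)
  also have "\<dots> = Op" unfolding Op_def by (rule cf_one_conj[OF xc])
  finally have cfO: "cf G f x l = wprod G ws \<otimes> Op"
    using ws(3) cf_one[of l "\<lambda>_. \<one>"] xc fc by simp
  have wsc: "set ws \<subseteq> carrier G" using ws letters_carrier sub by blast
  have x1: "x 1 \<in> carrier G" using x sub m by auto
  define ws' where "ws' = map (\<lambda>c. x 1 \<otimes> c \<otimes> inv (x 1)) ws"
  have ws'L: "set ws' \<subseteq> letters G N" using ws(2) letter_conj[OF N] x1 by (auto simp: ws'_def)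
  have W': "wprod G ws' = x 1 \<otimes> wprod G ws \<otimes> inv (x 1)"
    using wprod_conj[OF wsc x1] by (simp add: ws'_def)
  have u: "[1..<Suc m] = 1 # [2..<Suc m]" using m by (simp del: upt_Suc add: upt_conv_Cons numeral_2_eq_2)
  have op: "ordprod G m x = x 1 \<otimes> Op"
    unfolding ordprod_def u Op_def l_def by simp
  have "conjprod G m x f = x 1 \<otimes> (wprod G ws \<otimes> Op)"
    unfolding conjprod_cf cfO[unfolded l_def] by (rule refl)
  also have "\<dots> = wprod G ws' \<otimes> ordprod G m x"
    using x1 wsc Opc by (simp add: W' op m_assoc)
  finally show ?thesis
    using subgroup.m_closed[OF H_sub[OF sub] wprod_mixed[OF sub ws'L] o] by simp
qed

lemma P_mem:
  assumes N: "N \<lhd> G" and x: "\<forall>i\<in>{1..m}. x i \<in> N" and m: "m \<ge> 1"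
    and o: "ordprod G m x \<in> mixed_comm G N"
  shows "\<forall>f. (\<forall>i\<in>{2..m}. f i \<in> carrier G) \<longrightarrow> conjprod G m (\<lambda>i. x i [^] (n::nat)) f \<in> mixed_comm G N"
proof (induct n)
  case 0
  show ?case
  proof (intro allI impI)
    fix f assume f: "\<forall>i\<in>{2..m}. f i \<in> carrier G"
    have fl: "\<forall>i\<in>set [2..<Suc m]. f i \<in> carrier G" using f by auto
    have c1: "cf G f (\<lambda>_. \<one>) [2..<Suc m] = \<one>" by (rule cf_one[OF fl])
    have eq: "(\<lambda>i. x i [^] (0::nat)) = (\<lambda>_. \<one>)" by simp
    have "conjprod G m (\<lambda>i. x i [^] (0::nat)) f = \<one>"
      unfolding conjprod_cf eq c1 by simp
    then show "conjprod G m (\<lambda>i. x i [^] (0::nat)) f \<in> mixed_comm G N"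
      by (simp add: mixed_comm_def generate.one)
  qed
next
  case (Suc n)
  have sub: "N \<subseteq> carrier G" using N normal_imp_subgroup subgroup.subset by blast
  have xc: "\<forall>i\<in>{1..m}. x i \<in> carrier G" using x sub by auto
  show ?case
  proof (intro allI impI)
    fix f assume f: "\<forall>i\<in>{2..m}. f i \<in> carrier G"
    obtain ws where ws: "length ws = m - 1" "set ws \<subseteq> letters G N"
      "conjprod G m (\<lambda>i. x i [^] n) f \<otimes> conjprod G m (\<lambda>i. x i [^] (1::nat)) f
      = wprod G ws \<otimes> conjprod G m (\<lambda>i. x i [^] (n + 1)) f"
      using combine[OF N x m f f, of n 1] by blast
    have xl: "\<forall>i\<in>set [2..<Suc m]. x i \<in> carrier G" using xc by auto
    have cc: "cf G f (\<lambda>i. x i [^] (1::nat)) [2..<Suc m] = cf G f x [2..<Suc m]"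
      by (rule cf_cong) (use xl in simp)
    have x1: "x 1 [^] (1::nat) = x 1" using xc m by simp
    have p1: "conjprod G m (\<lambda>i. x i [^] (1::nat)) f = conjprod G m x f"
      unfolding conjprod_cf cc x1 ..
    have P1: "conjprod G m (\<lambda>i. x i [^] (1::nat)) f \<in> mixed_comm G N"
      unfolding p1 by (rule P1_mem[OF N x m o f])
    have Pn: "conjprod G m (\<lambda>i. x i [^] n) f \<in> mixed_comm G N" using Suc f by blast
    have wsc: "set ws \<subseteq> carrier G" using ws letters_carrier sub by blast
    have Rc: "conjprod G m (\<lambda>i. x i [^] (n + 1)) f \<in> carrier G"
      by (rule conjprod_closed) (use xc f m in auto)
    have "conjprod G m (\<lambda>i. x i [^] (n + 1)) f
       = inv (wprod G ws) \<otimes> (conjprod G m (\<lambda>i. x i [^] n) f \<otimes> conjprod G m (\<lambda>i. x i [^] (1::nat)) f)"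
      using ws(3) wsc Rc by simp
    also have "\<dots> \<in> mixed_comm G N"
      using H_sub[OF sub] wprod_mixed[OF sub ws(2)] Pn P1
      by (meson subgroup.m_closed subgroup.m_inv_closed)
    finally show "conjprod G m (\<lambda>i. x i [^] Suc n) f \<in> mixed_comm G N" by simp
  qed
qed

lemma cl_sum_le: "\<forall>i\<in>{2..m}. h i \<in> carrier G \<Longrightarrow> cl_sum G N m y \<le> cl G N (conjprod G m y h)"
  unfolding cl_sum_def Inf_nat_def by (rule Least_le) blast

lemma cl_sum_attain: "\<exists>h. (\<forall>i\<in>{2..m}. h i \<in> carrier G) \<and> cl_sum G N m y = cl G N (conjprod G m y h)"
proof -
  let ?K = "{cl G N (conjprod G m y h) | h. \<forall>i\<in>{2..m}. h i \<in> carrier G}"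
  have "?K \<noteq> {}" by (rule ex_in_conv[THEN iffD1], rule exI[of _ "cl G N (conjprod G m y (\<lambda>_. \<one>))"]) auto
  then have "Inf ?K \<in> ?K" by (rule Inf_nat_def1)
  then show ?thesis unfolding cl_sum_def by auto
qed

lemma subadd:
  fixes n k :: nat
  assumes N: "N \<lhd> G" and x: "\<forall>i\<in>{1..m}. x i \<in> N" and m: "m \<ge> 1"
    and o: "ordprod G m x \<in> mixed_comm G N"
  shows "cl_sum G N m (\<lambda>i. x i [^] (n + k)) \<le> cl_sum G N m (\<lambda>i. x i [^] n) + cl_sum G N m (\<lambda>i. x i [^] k) + (m - 1)"
proof -
  have sub: "N \<subseteq> carrier G" using N normal_imp_subgroup subgroup.subset by blast
  obtain h where h: "\<forall>i\<in>{2..m}. h i \<in> carrier G" "cl_sum G N m (\<lambda>i. x i [^] n) = cl G N (conjprod G m (\<lambda>i. x i [^] n) h)"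
    using cl_sum_attain by blast
  obtain f where f: "\<forall>i\<in>{2..m}. f i \<in> carrier G" "cl_sum G N m (\<lambda>i. x i [^] k) = cl G N (conjprod G m (\<lambda>i. x i [^] k) f)"
    using cl_sum_attain by blast
  define P where "P = conjprod G m (\<lambda>i. x i [^] n) h"
  define Q where "Q = conjprod G m (\<lambda>i. x i [^] k) f"
  define R where "R = conjprod G m (\<lambda>i. x i [^] (n + k)) f"
  have PH: "P \<in> mixed_comm G N" using P_mem[OF N x m o] h(1) by (simp add: P_def)
  have QH: "Q \<in> mixed_comm G N" using P_mem[OF N x m o] f(1) by (simp add: Q_def)
  obtain ps where ps: "set ps \<subseteq> letters G N" "length ps = cl G N P" "P = wprod G ps"
    using cl_attain[OF PH sub] by blast
  obtain qs where qs: "set qs \<subseteq> letters G N" "length qs = cl G N Q" "Q = wprod G qs"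
    using cl_attain[OF QH sub] by blast
  obtain ws where ws: "length ws = m - 1" "set ws \<subseteq> letters G N" "P \<otimes> Q = wprod G ws \<otimes> R"
    using combine[OF N x m h(1) f(1), of n k] unfolding P_def Q_def R_def by blast
  have L: "letters G N \<subseteq> carrier G" using letters_carrier[OF sub] .
  have wsc: "set ws \<subseteq> carrier G" "set ps \<subseteq> carrier G" "set qs \<subseteq> carrier G"
    using ws ps qs L by auto
  have xc: "\<forall>i\<in>{1..m}. x i \<in> carrier G" using x sub by auto
  have Rc: "R \<in> carrier G" unfolding R_def by (rule conjprod_closed) (use xc f m in auto)
  define vs where "vs = rev (map (\<lambda>c. inv c) ws)"
  have vsL: "set vs \<subseteq> letters G N" using ws(2) letter_inv[OF sub] by (auto simp: vs_def)
  have vsc: "set vs \<subseteq> carrier G" using vsL L by auto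
  have "R = inv (wprod G ws) \<otimes> (P \<otimes> Q)" using ws(3) wsc Rc by simp
  also have "\<dots> = wprod G (vs @ ps @ qs)"
    using wsc vsc by (simp add: wprod_append wprod_inv vs_def ps(3) qs(3))
  finally have "cl G N R \<le> length (vs @ ps @ qs)" using cl_le[of "vs @ ps @ qs"] vsL ps qs by simp
  then have "cl G N R \<le> cl G N P + cl G N Q + (m - 1)" using ps qs ws by (simp add: vs_def)
  moreover have "cl_sum G N m (\<lambda>i. x i [^] (n + k)) \<le> cl G N R" unfolding R_def by (rule cl_sum_le[OF f(1)])
  ultimately show ?thesis using h f by (simp add: P_def Q_def)
qed

end



lemma fekete_aux:
  fixes a :: "nat \<Rightarrow> real"
  assumes sa: "\<And>n k. a (n + k) \<le> a n + a k"
  shows "a (q * p + i) \<le> real q * a p + a i"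
proof (induct q)
  case 0 then show ?case by simp
next
  case (Suc q)
  have "a (Suc q * p + i) = a (p + (q * p + i))" by (simp add: algebra_simps)
  also have "\<dots> \<le> a p + a (q * p + i)" by (rule sa)
  also have "\<dots> \<le> a p + (real q * a p + a i)" using Suc by simp
  finally show ?case by (simp add: algebra_simps)
qed

lemma fekete:
  fixes a :: "nat \<Rightarrow> real"
  assumes sa: "\<And>n k. a (n + k) \<le> a n + a k" and nn: "\<And>n. a n \<ge> 0"
  shows "convergent (\<lambda>n. a n / real n)"
proof -
  define S where "S = (\<lambda>n. a n / real n) ` {1..}"
  define L where "L = Inf S"
  have Sne: "S \<noteq> {}" by (auto simp: S_def)
  have Sbdd: "bdd_below S" unfolding S_def bdd_below_def using nn
    by (intro exI[of _ 0]) auto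
  have Llow: "L \<le> a n / real n" if "n \<ge> 1" for n
    unfolding L_def by (rule cInf_lower[OF _ Sbdd]) (use that in \<open>auto simp: S_def\<close>)
  have "(\<lambda>n. a n / real n) \<longlonglongrightarrow> L"
  proof (rule LIMSEQ_I)
    fix r :: real assume r: "0 < r"
    have "Inf S < L + r / 2" using r by (simp add: L_def)
    then obtain s where "s \<in> S" "s < L + r / 2" using cInf_less_iff[OF Sne Sbdd] by blast
    then obtain p where p: "p \<ge> 1" "a p / real p < L + r / 2" by (auto simp: S_def)
    define M where "M = (\<Sum>i<p. a i)"
    have M: "a i \<le> M" if "i < p" for i
      unfolding M_def by (rule member_le_sum) (use that nn in auto)
    have M0: "M \<ge> 0" unfolding M_def by (rule sum_nonneg) (use nn in auto)
    obtain n0 :: nat where n0: "2 * M / r < real n0" using reals_Archimedean2 by blast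
    show "\<exists>no. \<forall>n\<ge>no. norm (a n / real n - L) < r"
    proof (intro exI[of _ "Suc n0"] allI impI)
      fix n assume n: "Suc n0 \<le> n"
      have npos: "real n > 0" using n by simp
      define q where "q = n div p"
      define i where "i = n mod p"
      have ndec: "n = q * p + i" by (simp add: q_def i_def)
      have ip: "i < p" using p(1) by (simp add: i_def)
      have "a n \<le> real q * a p + a i" using fekete_aux[of a, OF sa] ndec by metis
      also have "\<dots> \<le> real q * a p + M" using M[OF ip] by simp
      finally have an: "a n \<le> real q * a p + M" .
      have qp: "real q * real p \<le> real n"
        using ndec by (metis le_add1 of_nat_le_iff of_nat_mult)
      have ppos: "real p > 0" using p(1) by simp
      have "a p * (real q * real p) \<le> a p * real n" by (rule mult_left_mono[OF qp nn])
      then have t1: "real q * a p / real n \<le> a p / real p"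
        using npos ppos by (simp add: field_simps)
      have "M / real n \<le> M / real (Suc n0)"
        using n M0 by (intro divide_left_mono) auto
      also have "\<dots> < r / 2"
        using n0 r M0 by (simp add: field_simps)
      finally have t2: "M / real n < r / 2" .
      have "a n / real n \<le> (real q * a p + M) / real n"
        using an npos by (simp add: divide_right_mono)
      also have "\<dots> = real q * a p / real n + M / real n" by (simp add: add_divide_distrib)
      finally have "a n / real n < L + r" using t1 t2 p(2) by linarith
      moreover have "L \<le> a n / real n" using Llow n by simp
      ultimately show "norm (a n / real n - L) < r" by simp
    qed
  qed
  then show ?thesis by (rule convergentI)
qed


theorem lemma5p11:
  fixes G (structure) and N :: "'a set" and m :: nat and x :: "nat \<Rightarrow> 'a"
  assumes "group G" and "N \<lhd> G" and "m \<ge> 1"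
    and "\<forall>i\<in>{1..m}. x i \<in> N"
    and "ordprod G m x \<in> mixed_comm G N"
  shows "(\<forall>n k :: nat. cl_sum G N m (\<lambda>i. x i [^] (n + k)) + (m - 1)
            \<le> (cl_sum G N m (\<lambda>i. x i [^] n) + (m - 1)) + (cl_sum G N m (\<lambda>i. x i [^] k) + (m - 1)))
         \<and> convergent (\<lambda>n. real (cl_sum G N m (\<lambda>i. x i [^] n)) / real n)"
proof -
  interpret group G by fact
  have sa: "cl_sum G N m (\<lambda>i. x i [^] (n + k)) \<le> cl_sum G N m (\<lambda>i. x i [^] n) + cl_sum G N m (\<lambda>i. x i [^] k) + (m - 1)"
    for n k :: nat
    by (rule subadd[OF assms(2) assms(4) assms(3) assms(5)])
  define a where "a = (\<lambda>n::nat. real (cl_sum G N m (\<lambda>i. x i [^] n) + (m - 1)))"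
  have "a (n + k) \<le> a n + a k" for n k
    using sa[of n k] unfolding a_def by linarith
  then have c1: "convergent (\<lambda>n. a n / real n)" by (rule fekete) (simp add: a_def)
  have c2: "convergent (\<lambda>n. real (m - 1) / real n)"
    using lim_const_over_n[of "real (m - 1)"] by (rule convergentI)
  have "convergent (\<lambda>n. a n / real n - real (m - 1) / real n)"
    using convergent_diff[OF c1 c2] .
  moreover have "(\<lambda>n. a n / real n - real (m - 1) / real n) = (\<lambda>n. real (cl_sum G N m (\<lambda>i. x i [^] n)) / real n)"
    by (rule ext) (simp add: a_def diff_divide_distrib[symmetric])
  ultimately have conv: "convergent (\<lambda>n. real (cl_sum G N m (\<lambda>i. x i [^] n)) / real n)" by simp
  show ?thesis using sa conv by (auto simp: add.assoc)
qed

end
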